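(* Let $K_1,K_2,t$ be positive integers with $K_2<t<K_1K_2$, let $N\ge K_1K_2$, and let $M_1,M_2$ satisfy $$\frac{M_1}{N}=\frac{\binom{K_1K_2-K_2}{t-K_2}}{\binom{K_1K_2}{t}},\qquad \frac{M_2}{N}=\frac{t}{K_1K_2}-\frac{\binom{K_1K_2-K_2}{t-K_2}}{\binom{K_1K_2}{t}}.$$ Then the optimal first-layer load under uncoded placement of the $(K_1,K_2;M_1,M_2;N)$ hierarchical caching system is $$R_1^*=\frac{K_1K_2\left(1-\frac{M_1+M_2}{N}\right)}{K_1K_2\frac{M_1+M_2}{N}+1}=\frac{K_1K_2-t}{t+1}.$$
   Context: Notation: $[a]=\{1,\ldots,a\}$. Hierarchical caching model $(K_1,K_2;M_1,M_2;N)$. A server stores $N$ independent files $W_1,\ldots,W_N$, each uniformly distributed on $B$ bits. There are $K_1$ mirror sites, each with a cache of $M_1B$ bits, and $K_1K_2$ users $U_{k_1,k_2}$ ($k_1\in[K_1]$, $k_2\in[K_2]$), each with a cache of $M_2B$ bits; user $U_{k_1,k_2}$ is attached to mirror site $k_1$. The server reaches all mirror sites through one error-free broadcast link; mirror site $k_1$ reaches its $K_2$ attached users through an error-free broadcast link. A scheme with uncoded placement: in the placement phase (without knowledge of demands) each mirror site $k_1$ stores a subset $\mathcal{Z}_{k_1}$ of the bits of the files, of size at most $M_1B$ bits, and each user $U_{k_1,k_2}$ stores a subset $\mathcal{Z}_{(k_1,k_2)}$ of the bits of the files, of size at most $M_2B$ bits. In the delivery phase, given a demand vector $\mathbf{d}=(d_{k_1,k_2})\in[N]^{K_1K_2}$,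 the server broadcasts to the mirror sites a message $X$ (a function of the files and $\mathbf{d}$) of length $L(\mathbf{d})$ bits; each mirror site $k_1$ broadcasts to its attached users a message $X_{k_1}$ that is a function of $X$, $\mathcal{Z}_{k_1}$ and $\mathbf{d}$; each user $U_{k_1,k_2}$ must recover $W_{d_{k_1,k_2}}$ from $X_{k_1}$, $\mathcal{Z}_{(k_1,k_2)}$ and $\mathbf{d}$. The first-layer load is $R_1=\max_{\mathbf{d}\in[N]^{K_1K_2}}L(\mathbf{d})/B$. The optimal first-layer load under uncoded placement $R_1^*$ is the infimum of $R_1$ over all file sizes $B$ and all such schemes with uncoded placement in which every user decodes correctly. *)

theory Defs
  imports Complex_Main "HOL-Library.FuncSet"
begin

text \<open>A realization of the N files of B bits: file n (n in 1..N), bit b (b < B).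
  Bits of the library are the pairs (n,b) in {1..N} x {..<B}.\<close>
type_synonym files = "nat \<Rightarrow> nat \<Rightarrow> bool"

type_synonym demand = "nat \<times> nat \<Rightarrow> nat"

definition bits :: "nat \<Rightarrow> nat \<Rightarrow> (nat \<times> nat) set" where
  "bits N B = {1..N} \<times> {..<B}"

definition demands :: "nat \<Rightarrow> nat \<Rightarrow> nat \<Rightarrow> demand set" where
  "demands K1 K2 N = ({1..K1} \<times> {1..K2}) \<rightarrow>\<^sub>E {1..N}"

definition valid_files :: "nat \<Rightarrow> nat \<Rightarrow> files \<Rightarrow> bool" where
  "valid_files N B w \<longleftrightarrow> (\<forall>n b. (n, b) \<notin> bits N B \<longrightarrow> \<not> w n b)"

definition cache :: "(nat \<times> nat) set \<Rightarrow> files \<Rightarrow> (nat \<times> nat \<Rightarrow> bool option)" where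
  "cache Z w = (\<lambda>(n, b). if (n, b) \<in> Z then Some (w n b) else None)"

text \<open>A correct scheme with uncoded placement for file size B:
  Zm k1 : bits stored at mirror k1;  Zu (k1,k2) : bits stored at user (k1,k2);
  X d w : server message (length L d);  Y d k1 x c : message of mirror k1;
  D d (k1,k2) y c b : the decoded b-th bit of user (k1,k2).\<close>
definition valid_scheme ::
  "nat \<Rightarrow> nat \<Rightarrow> real \<Rightarrow> real \<Rightarrow> nat \<Rightarrow> nat \<Rightarrow>
   (nat \<Rightarrow> (nat \<times> nat) set) \<Rightarrow> (nat \<times> nat \<Rightarrow> (nat \<times> nat) set) \<Rightarrow>
   (demand \<Rightarrow> nat) \<Rightarrow> (demand \<Rightarrow> files \<Rightarrow> bool list) \<Rightarrow>
   (demand \<Rightarrow> nat \<Rightarrow> bool list \<Rightarrow> (nat \<times> nat \<Rightarrow> bool option) \<Rightarrow> bool list) \<Rightarrow>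
   (demand \<Rightarrow> nat \<times> nat \<Rightarrow> bool list \<Rightarrow> (nat \<times> nat \<Rightarrow> bool option) \<Rightarrow> nat \<Rightarrow> bool) \<Rightarrow> bool" where
  "valid_scheme K1 K2 M1 M2 N B Zm Zu L X Y D \<longleftrightarrow>
     (\<forall>k1\<in>{1..K1}. Zm k1 \<subseteq> bits N B \<and> real (card (Zm k1)) \<le> M1 * real B) \<and>
     (\<forall>k1\<in>{1..K1}. \<forall>k2\<in>{1..K2}. Zu (k1, k2) \<subseteq> bits N B \<and> real (card (Zu (k1, k2))) \<le> M2 * real B) \<and>
     (\<forall>d\<in>demands K1 K2 N. \<forall>w. valid_files N B w \<longrightarrow> length (X d w) = L d) \<and>
     (\<forall>d\<in>demands K1 K2 N. \<forall>k1\<in>{1..K1}. \<forall>k2\<in>{1..K2}. \<forall>w. valid_files N B w \<longrightarrow>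
        (\<forall>b<B. D d (k1, k2) (Y d k1 (X d w) (cache (Zm k1) w)) (cache (Zu (k1, k2)) w) b
               = w (d (k1, k2)) b))"

definition R1_star :: "nat \<Rightarrow> nat \<Rightarrow> real \<Rightarrow> real \<Rightarrow> nat \<Rightarrow> real" where
  "R1_star K1 K2 M1 M2 N = Inf {real (Max (L ` demands K1 K2 N)) / real B | B Zm Zu L X Y D.
      B > 0 \<and> valid_scheme K1 K2 M1 M2 N B Zm Zu L X Y D}"

end

theory Submission
  imports Defs
begin


definition phi :: "nat \<Rightarrow> nat \<Rightarrow> nat \<Rightarrow> nat" where
  "phi N j m = (m + j) mod N + 1"

lemma mod_cancel_aux: "((m::nat) + j) mod N = (m' + j) mod N \<Longrightarrow> m mod N = m' mod N"
  by (simp add: nat_mod_eq_iff)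

lemma phi_inj_m:
  assumes "m \<in> {1..N}" "m' \<in> {1..N}" "phi N j m = phi N j m'"
  shows "m = m'"
proof -
  have e: "m mod N = m' mod N" by (rule mod_cancel_aux[of m j N m']) (use assms(3) in \<open>simp add: phi_def\<close>)
  have r: "x mod N = (if x = N then 0 else x)" if x: "x \<in> {1..N}" for x
  proof (cases "x = N")
    case True then show ?thesis by simp
  next
    case False then have "x < N" using x by simp
    then show ?thesis using False by simp
  qed
  show ?thesis using e r[OF assms(1)] r[OF assms(2)] assms(1,2) by (simp split: if_splits)
qed

lemma phi_bij_j:
  assumes "N > 0"
  shows "bij_betw (\<lambda>j. phi N j m) {..<N} {1..N}"
proof -
  have inj: "inj_on (\<lambda>j. phi N j m) {..<N}"
  proof (rule inj_onI)
    fix j j' assume "j \<in> {..<N}" "j' \<in> {..<N}" "phi N j m = phi N j' m"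
    then have "(j + m) mod N = (j' + m) mod N" unfolding phi_def by (simp add: add.commute)
    then have "j mod N = j' mod N" by (rule mod_cancel_aux)
    then show "j = j'" using \<open>j \<in> {..<N}\<close> \<open>j' \<in> {..<N}\<close> by simp
  qed
  have sub: "(\<lambda>j. phi N j m) ` {..<N} \<subseteq> {1..N}"
  proof
    fix x assume "x \<in> (\<lambda>j. phi N j m) ` {..<N}"
    then obtain j where "x = (m + j) mod N + 1" unfolding phi_def by auto
    moreover have "(m + j) mod N < N" using assms by simp
    ultimately show "x \<in> {1..N}" by simp
  qed
  have "card ((\<lambda>j. phi N j m) ` {..<N}) = card {1..N}" using card_image[OF inj] by simp
  then have "(\<lambda>j. phi N j m) ` {..<N} = {1..N}" using card_subset_eq[OF _ sub] by simp
  then show ?thesis using inj unfolding bij_betw_def by simp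
qed

locale conv =
  fixes K1 K2 :: nat and M1 M2 :: real and N B :: nat
    and Zm :: "nat \<Rightarrow> (nat \<times> nat) set" and Zu :: "nat \<times> nat \<Rightarrow> (nat \<times> nat) set"
    and L :: "demand \<Rightarrow> nat" and X :: "demand \<Rightarrow> files \<Rightarrow> bool list"
    and Y :: "demand \<Rightarrow> nat \<Rightarrow> bool list \<Rightarrow> (nat \<times> nat \<Rightarrow> bool option) \<Rightarrow> bool list"
    and D :: "demand \<Rightarrow> nat \<times> nat \<Rightarrow> bool list \<Rightarrow> (nat \<times> nat \<Rightarrow> bool option) \<Rightarrow> nat \<Rightarrow> bool"
  assumes vs: "valid_scheme K1 K2 M1 M2 N B Zm Zu L X Y D"
begin

definition "U = {1..K1} \<times> {1..K2}"
definition "C u = Zm (fst u) \<union> Zu u"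
definition "CU A = \<Union>(C ` A)"
definition "F n = {n::nat} \<times> {..<B}"
definition "wq Q = (\<lambda>n b. (n, b) \<in> Q)"

lemma C_bits: "u \<in> U \<Longrightarrow> C u \<subseteq> bits N B"
  using vs unfolding valid_scheme_def C_def U_def by (cases u) auto

lemma CU_bits: "A \<subseteq> U \<Longrightarrow> CU A \<subseteq> bits N B"
  using C_bits unfolding CU_def by blast

lemma F_bits: "n \<in> {1..N} \<Longrightarrow> F n \<subseteq> bits N B"
  unfolding F_def bits_def by auto

lemma dem_U: "d \<in> demands K1 K2 N \<Longrightarrow> u \<in> U \<Longrightarrow> d u \<in> {1..N}"
  unfolding demands_def U_def by (auto simp: PiE_def Pi_def)

fun SS :: "demand \<Rightarrow> (nat \<times> nat) list \<Rightarrow> (nat \<times> nat) set" where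
  "SS d [] = {}"
| "SS d (u # ys) = (F (d u) - CU (set (u # ys))) \<union> SS d ys"

lemma wq_apply: "wq Q n b = ((n, b) \<in> Q)"
  unfolding wq_def by simp

lemma SS_bits: "d \<in> demands K1 K2 N \<Longrightarrow> set xs \<subseteq> U \<Longrightarrow> SS d xs \<subseteq> bits N B"
proof (induction xs)
  case (Cons u ys)
  have "F (d u) \<subseteq> bits N B" using F_bits dem_U Cons.prems by simp
  then show ?case using Cons by auto
qed simp

lemma SS_sub: "SS d xs \<subseteq> (\<Union>v\<in>set xs. F (d v))"
  by (induction xs) auto

lemma cache_eq: "Q \<inter> Z = Q' \<inter> Z \<Longrightarrow> cache Z (wq Q) = cache Z (wq Q')"
  unfolding cache_def wq_apply by (auto simp: fun_eq_iff)

lemma inj_chain: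
  assumes d: "d \<in> demands K1 K2 N" and xs: "set xs \<subseteq> U"
  shows "E \<subseteq> bits N B \<Longrightarrow> E \<inter> CU (set xs) = {} \<Longrightarrow> Q \<subseteq> SS d xs \<union> E \<Longrightarrow> Q' \<subseteq> SS d xs \<union> E
     \<Longrightarrow> X d (wq Q) = X d (wq Q') \<Longrightarrow> Q \<inter> SS d xs = Q' \<inter> SS d xs"
  using xs
proof (induction xs arbitrary: E)
  case Nil
  then show ?case by simp
next
  case (Cons u ys)
  define A where "A = F (d u) - CU (set (u # ys))"
  have u: "u \<in> U" using Cons by auto
  have Abits: "A \<subseteq> bits N B" using F_bits dem_U[OF d u] unfolding A_def by blast
  have SSeq: "SS d (u # ys) = A \<union> SS d ys" unfolding A_def by simp
  have IH: "Q \<inter> SS d ys = Q' \<inter> SS d ys"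
    apply (rule Cons.IH[of "A \<union> E"])
    using Cons.prems Abits unfolding SSeq A_def CU_def by auto
  have "C u \<subseteq> CU (set (u # ys))" unfolding CU_def by auto
  hence AC: "A \<inter> C u = {}" and EC: "E \<inter> C u = {}" using Cons.prems unfolding A_def by auto
  have QC: "Q \<inter> C u = Q' \<inter> C u"
  proof -
    have "Q \<inter> C u = Q \<inter> SS d ys \<inter> C u" using Cons.prems(3) AC EC unfolding SSeq by blast
    moreover have "Q' \<inter> C u = Q' \<inter> SS d ys \<inter> C u" using Cons.prems(4) AC EC unfolding SSeq by blast
    ultimately show ?thesis using IH by simp
  qed
  obtain k1 k2 where uk: "u = (k1, k2)" "k1 \<in> {1..K1}" "k2 \<in> {1..K2}" using u unfolding U_def by auto
  have c1: "cache (Zm k1) (wq Q) = cache (Zm k1) (wq Q')"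
    by (rule cache_eq) (use QC uk in \<open>auto simp: C_def\<close>)
  have c2: "cache (Zu (k1,k2)) (wq Q) = cache (Zu (k1,k2)) (wq Q')"
    by (rule cache_eq) (use QC uk in \<open>auto simp: C_def\<close>)
  have SSall: "SS d (u # ys) \<subseteq> bits N B" using SS_bits[OF d] Cons.prems(6) .
  have vQ: "valid_files N B (wq Q)" "valid_files N B (wq Q')"
    using Cons.prems SSall unfolding valid_files_def wq_apply by auto
  have dec: "\<forall>b<B. wq Q (d u) b = wq Q' (d u) b"
  proof (intro allI impI)
    fix b assume b: "b < B"
    have "wq Q (d u) b = D d (k1, k2) (Y d k1 (X d (wq Q)) (cache (Zm k1) (wq Q))) (cache (Zu (k1, k2)) (wq Q)) b"
      using vs d uk vQ b unfolding valid_scheme_def by metis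
    also have "\<dots> = D d (k1, k2) (Y d k1 (X d (wq Q')) (cache (Zm k1) (wq Q'))) (cache (Zu (k1, k2)) (wq Q')) b"
      by (simp only: c1 c2 Cons.prems(5))
    also have "\<dots> = wq Q' (d u) b"
      using vs d uk vQ b unfolding valid_scheme_def by metis
    finally show "wq Q (d u) b = wq Q' (d u) b" .
  qed
  have "Q \<inter> A = Q' \<inter> A"
    using dec unfolding A_def F_def wq_apply by auto
  then show ?case using IH unfolding SSeq by blast
qed

lemma card_chain:
  assumes d: "d \<in> demands K1 K2 N" and xs: "set xs \<subseteq> U"
  shows "card (SS d xs) \<le> L d"
proof -
  let ?S = "SS d xs"
  have fin: "finite ?S" using SS_bits[OF d xs] finite_subset unfolding bits_def by blast
  have inj: "inj_on (\<lambda>Q. X d (wq Q)) (Pow ?S)"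
  proof (rule inj_onI)
    fix Q Q' assume "Q \<in> Pow ?S" "Q' \<in> Pow ?S" "X d (wq Q) = X d (wq Q')"
    then have "Q \<inter> ?S = Q' \<inter> ?S"
      using inj_chain[OF d xs, of "{}" Q Q'] by auto
    then show "Q = Q'" using \<open>Q \<in> Pow ?S\<close> \<open>Q' \<in> Pow ?S\<close> by blast
  qed
  have img: "(\<lambda>Q. X d (wq Q)) ` Pow ?S \<subseteq> {l. set l \<subseteq> (UNIV::bool set) \<and> length l = L d}"
  proof
    fix l assume "l \<in> (\<lambda>Q. X d (wq Q)) ` Pow ?S"
    then obtain Q where Q: "Q \<subseteq> ?S" "l = X d (wq Q)" by auto
    have "valid_files N B (wq Q)" using Q SS_bits[OF d xs] unfolding valid_files_def wq_apply by auto
    then show "l \<in> {l. set l \<subseteq> UNIV \<and> length l = L d}" using vs d Q unfolding valid_scheme_def by auto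
  qed
  have "2 ^ card ?S = card (Pow ?S)" using card_Pow[OF fin] by simp
  also have "\<dots> = card ((\<lambda>Q. X d (wq Q)) ` Pow ?S)" using card_image[OF inj] by simp
  also have "\<dots> \<le> card {l. set l \<subseteq> (UNIV::bool set) \<and> length l = L d}"
    by (rule card_mono[OF _ img]) (use finite_lists_length_eq[of "UNIV::bool set" "L d"] in simp)
  also have "\<dots> = 2 ^ L d" using card_lists_length_eq[of "UNIV::bool set" "L d"] by simp
  finally show ?thesis by simp
qed


fun csj :: "nat \<Rightarrow> (nat \<times> nat) list \<Rightarrow> nat" where
  "csj j [] = 0"
| "csj j (u # ys) = card (F (phi N j (Suc (length ys))) - CU (set (u # ys))) + csj j ys"

lemma F_disj: "n \<noteq> n' \<Longrightarrow> F n \<inter> F n' = {}"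
  unfolding F_def by auto

lemma F_fin: "finite (F n)"
  unfolding F_def by auto

lemma card_SS:
  assumes "set xs \<subseteq> U" "distinct xs" "length xs \<le> N"
    "\<forall>i<length xs. d (xs ! i) = phi N j (length xs - i)"
  shows "card (SS d xs) = csj j xs"
  using assms
proof (induction xs)
  case Nil
  then show ?case by simp
next
  case (Cons u ys)
  have du: "d u = phi N j (Suc (length ys))" using Cons.prems(4) by force
  have hys: "\<forall>i<length ys. d (ys ! i) = phi N j (length ys - i)"
  proof (intro allI impI)
    fix i assume "i < length ys"
    then show "d (ys ! i) = phi N j (length ys - i)" using Cons.prems(4)[rule_format, of "Suc i"] by simp
  qed
  have IH: "card (SS d ys) = csj j ys" using Cons hys by auto
  have disj: "(F (d u) - CU (set (u # ys))) \<inter> SS d ys = {}"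
  proof -
    have "F (d u) \<inter> F (d v) = {}" if v: "v \<in> set ys" for v
    proof -
      obtain i where i: "i < length ys" "v = ys ! i" using v by (auto simp: in_set_conv_nth)
      have "d v = phi N j (length ys - i)" using hys i by simp
      moreover have "phi N j (length ys - i) \<noteq> phi N j (Suc (length ys))"
      proof
        assume "phi N j (length ys - i) = phi N j (Suc (length ys))"
        then have "length ys - i = Suc (length ys)"
          by (rule phi_inj_m[rotated 2]) (use i Cons.prems(3) in auto)
        then show False by simp
      qed
      ultimately show ?thesis using du F_disj by metis
    qed
    then show ?thesis using SS_sub[of d ys] by blast
  qed
  have fin1: "finite (F (d u) - CU (set (u # ys)))" using F_fin by simp
  have fin2: "finite (SS d ys)"
    by (rule finite_subset[OF SS_sub]) (simp add: F_fin)
  have "card (SS d (u # ys)) = card (F (d u) - CU (set (u # ys))) + card (SS d ys)"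
    using card_Un_disjoint[OF fin1 fin2 disj] by simp
  then show ?case using IH du by simp
qed

lemma dem_exists:
  assumes "N > 0" "set xs \<subseteq> U" "distinct xs"
  shows "\<exists>d\<in>demands K1 K2 N. \<forall>i<length xs. d (xs ! i) = phi N j (length xs - i)"
  using assms(2,3)
proof (induction xs)
  case Nil
  have "(\<lambda>u. if u \<in> U then 1 else undefined) \<in> demands K1 K2 N"
    using assms(1) unfolding demands_def U_def by (auto simp: PiE_def Pi_def extensional_def)
  then show ?case by auto
next
  case (Cons u ys)
  then obtain d where d: "d \<in> demands K1 K2 N" "\<forall>i<length ys. d (ys ! i) = phi N j (length ys - i)"
    by auto
  define d' where "d' = d(u := phi N j (Suc (length ys)))"
  have "(Suc (length ys) + j) mod N < N" using assms(1) by simp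
  then have ph: "phi N j (Suc (length ys)) \<in> {1..N}" unfolding phi_def by simp
  have "d' \<in> demands K1 K2 N"
    using d(1) Cons.prems(1) ph unfolding d'_def demands_def U_def
    by (auto simp: PiE_def Pi_def extensional_def)
  moreover have "\<forall>i<length (u # ys). d' ((u # ys) ! i) = phi N j (length (u # ys) - i)"
  proof (intro allI impI)
    fix i assume i: "i < length (u # ys)"
    show "d' ((u # ys) ! i) = phi N j (length (u # ys) - i)"
    proof (cases i)
      case 0
      then show ?thesis unfolding d'_def by simp
    next
      case (Suc i')
      then have "ys ! i' \<noteq> u" using Cons.prems(2) i by (auto simp: in_set_conv_nth)
      then show ?thesis unfolding d'_def using d(2) Suc i by simp
    qed
  qed
  ultimately show ?case by blast
qed

primrec mu :: "nat \<Rightarrow> nat \<Rightarrow> (nat \<times> nat) set \<Rightarrow> real" where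
  "mu j 0 A = 0"
| "mu j (Suc n) A = real (card (F (phi N j (Suc n)) - CU A)) + (\<Sum>u\<in>A. mu j n (A - {u})) / real (card A)"

lemma avg_le:
  fixes f :: "'a \<Rightarrow> real"
  assumes "finite A" "A \<noteq> {}"
  shows "\<exists>u\<in>A. (\<Sum>v\<in>A. f v) / real (card A) \<le> f u"
proof -
  have "Max (f ` A) \<in> f ` A" using assms by simp
  then obtain u where u0: "u \<in> A" "f u = Max (f ` A)" by auto
  have u: "u \<in> A" "\<forall>v\<in>A. f v \<le> f u"
    using u0 assms(1) by auto
  have "(\<Sum>v\<in>A. f v) \<le> real (card A) * f u"
    using sum_bounded_above[of A f "f u"] u by simp
  moreover have "real (card A) > 0" using assms by (simp add: card_gt_0_iff)
  ultimately have "(\<Sum>v\<in>A. f v) / real (card A) \<le> f u"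
    by (simp add: divide_le_eq mult.commute)
  then show ?thesis using u by blast
qed

lemma exists_list:
  "finite A \<Longrightarrow> A \<subseteq> U \<Longrightarrow> card A = n \<Longrightarrow> n \<le> N \<Longrightarrow>
    \<exists>xs. distinct xs \<and> set xs = A \<and> mu j n A \<le> real (csj j xs)"
proof (induction n arbitrary: A)
  case 0
  then show ?case by (intro exI[of _ "[]"]) auto
next
  case (Suc n)
  then have ne: "A \<noteq> {}" by auto
  obtain u where u: "u \<in> A" "(\<Sum>v\<in>A. mu j n (A - {v})) / real (card A) \<le> mu j n (A - {u})"
    using avg_le[OF Suc.prems(1) ne] by blast
  obtain ys where ys: "distinct ys" "set ys = A - {u}" "mu j n (A - {u}) \<le> real (csj j ys)"
    using Suc.IH[of "A - {u}"] Suc.prems u(1) by auto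
  have len: "length ys = n" using ys Suc.prems u(1) distinct_card by fastforce
  have set: "set (u # ys) = A" using ys u by auto
  show ?case
  proof (intro exI conjI)
    show "distinct (u # ys)" using ys by auto
    show "set (u # ys) = A" by fact
    show "mu j (Suc n) A \<le> real (csj j (u # ys))"
      using u(2) ys(3) len set by simp
  qed
qed

lemma finU: "finite U" unfolding U_def by simp
lemma cardU: "card U = K1 * K2" unfolding U_def by (simp add: card_cartesian_product)

lemma finite_dem: "finite (demands K1 K2 N)"
  unfolding demands_def by (simp add: finite_PiE)

lemma mu_le_Max:
  assumes "N > 0" "K1 * K2 \<le> N"
  shows "mu j (K1 * K2) U \<le> real (Max (L ` demands K1 K2 N))"
proof -
  obtain xs where xs: "distinct xs" "set xs = U" "mu j (K1 * K2) U \<le> real (csj j xs)"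
    using exists_list[OF finU order_refl cardU assms(2)] by blast
  have len: "length xs = K1 * K2" using xs cardU distinct_card by fastforce
  obtain d where d: "d \<in> demands K1 K2 N" "\<forall>i<length xs. d (xs ! i) = phi N j (length xs - i)"
    using dem_exists[OF assms(1), of xs j] xs by auto
  have "csj j xs = card (SS d xs)"
    using card_SS[of xs d j] xs d len assms by simp
  also have "\<dots> \<le> L d" using card_chain[OF d(1)] xs by simp
  also have "\<dots> \<le> Max (L ` demands K1 K2 N)" using d(1) finite_dem by simp
  finally show ?thesis using xs(3) by linarith
qed

primrec G :: "nat \<Rightarrow> (nat \<times> nat) set \<Rightarrow> real" where
  "G 0 A = 0"
| "G (Suc n) A = real (card (bits N B - CU A)) + (\<Sum>u\<in>A. G n (A - {u})) / real (card A)"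

lemma card_bits_split: "card (bits N B - S) = (\<Sum>n\<in>{1..N}. card (F n - S))"
proof -
  have eq: "bits N B - S = (\<Union>n\<in>{1..N}. F n - S)" unfolding bits_def F_def by auto
  show ?thesis unfolding eq
    by (rule card_UN_disjoint) (auto simp: F_fin F_def)
qed

lemma sum_mu: "N > 0 \<Longrightarrow> (\<Sum>j<N. mu j n A) = G n A"
proof (induction n arbitrary: A)
  case 0
  then show ?case by simp
next
  case (Suc n)
  have "(\<Sum>j<N. real (card (F (phi N j (Suc n)) - CU A))) = (\<Sum>m\<in>{1..N}. real (card (F m - CU A)))"
    using sum.reindex_bij_betw[OF phi_bij_j[OF Suc.prems, of "Suc n"], of "\<lambda>m. real (card (F m - CU A))"]
    by simp
  also have "\<dots> = real (card (bits N B - CU A))" by (simp add: card_bits_split)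
  finally have 1: "(\<Sum>j<N. real (card (F (phi N j (Suc n)) - CU A))) = real (card (bits N B - CU A))" .
  have 2: "(\<Sum>j<N. (\<Sum>u\<in>A. mu j n (A - {u})) / real (card A)) = (\<Sum>u\<in>A. G n (A - {u})) / real (card A)"
  proof -
    have "(\<Sum>j<N. (\<Sum>u\<in>A. mu j n (A - {u})) / real (card A)) = (\<Sum>j<N. \<Sum>u\<in>A. mu j n (A - {u})) / real (card A)"
      by (simp add: sum_divide_distrib)
    also have "(\<Sum>j<N. \<Sum>u\<in>A. mu j n (A - {u})) = (\<Sum>u\<in>A. \<Sum>j<N. mu j n (A - {u}))"
      by (rule sum.swap)
    also have "\<dots> = (\<Sum>u\<in>A. G n (A - {u}))" using Suc.IH[OF Suc.prems] by simp
    finally show ?thesis .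
  qed
  show ?case using 1 2 by (simp add: sum.distrib)
qed

primrec rho :: "nat \<Rightarrow> nat \<times> nat \<Rightarrow> (nat \<times> nat) set \<Rightarrow> real" where
  "rho 0 b A = 0"
| "rho (Suc n) b A = (if b \<in> CU A then 0 else 1) + (\<Sum>u\<in>A. rho n b (A - {u})) / real (card A)"

lemma G_rho: "G n A = (\<Sum>b\<in>bits N B. rho n b A)"
proof (induction n arbitrary: A)
  case 0
  then show ?case by simp
next
  case (Suc n)
  have fb: "finite (bits N B)" unfolding bits_def by simp
  have 1: "real (card (bits N B - CU A)) = (\<Sum>b\<in>bits N B. (if b \<in> CU A then 0 else 1::real))"
    using fb by (simp add: sum.If_cases Diff_eq)
  show ?case
    by (simp add: Suc.IH 1 sum.distrib sum_divide_distrib[symmetric] sum.swap[of _ "bits N B"])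
qed


lemma rho_alg:
  fixes n r :: real assumes r: "r > 0" and n: "n \<ge> 0"
  shows "(r * ((n - (r - 1)) / r) + (n + 1 - r) * ((n - r) / (r + 1))) / (n + 1) = (n + 1 - r) / (r + 1)"
proof -
  have 1: "r * ((n - (r - 1)) / r) = (n + 1 - r)" using r by simp
  have 2: "(n + 1 - r) + (n + 1 - r) * ((n - r) / (r + 1)) = (n + 1 - r) * ((n + 1) / (r + 1))"
  proof -
    have "1 + (n - r) / (r + 1) = (n + 1) / (r + 1)" using r by (simp add: field_simps)
    then show ?thesis by (metis distrib_left mult.right_neutral)
  qed
  show ?thesis unfolding 1 2 using n by simp
qed
lemma rho_alg0:
  fixes n :: real assumes n: "n \<ge> 0"
  shows "1 + (0 * ((n - (0 - 1)) / 0) + (n + 1 - 0) * ((n - 0) / (0 + 1))) / (n + 1) = (n + 1 - 0) / (0 + 1)"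
  using n by simp

lemma rho_closed:
  "finite A \<Longrightarrow> card A = n \<Longrightarrow>
    rho n b A = (real n - real (card {u\<in>A. b \<in> C u})) / (real (card {u\<in>A. b \<in> C u}) + 1)"
proof (induction n arbitrary: A)
  case 0
  then show ?case by simp
next
  case (Suc n)
  define R where "R = {u\<in>A. b \<in> C u}"
  define r where "r = card R"
  have finR: "finite R" using Suc.prems(1) unfolding R_def by simp
  have RA: "R \<subseteq> A" unfolding R_def by auto
  have rle: "r \<le> Suc n" using card_mono[OF Suc.prems(1) RA] Suc.prems(2) unfolding r_def by simp
  have cAR: "card (A - R) = Suc n - r" using card_Diff_subset[OF finR RA] Suc.prems(2) unfolding r_def by simp
  have CUiff: "b \<in> CU A \<longleftrightarrow> r > 0"
    using finR unfolding r_def R_def CU_def by (auto simp: card_gt_0_iff)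
  have trm: "rho n b (A - {u}) = (if u \<in> R then (real n - (real r - 1)) / real r
                                   else (real n - real r) / (real r + 1))" if u: "u \<in> A" for u
  proof -
    have c: "card (A - {u}) = n" using Suc.prems u by simp
    have e1: "rho n b (A - {u}) = (real n - real (card {v\<in>A - {u}. b \<in> C v})) / (real (card {v\<in>A - {u}. b \<in> C v}) + 1)"
      using Suc.IH[of "A - {u}"] Suc.prems(1) c by simp
    have e2: "{v\<in>A - {u}. b \<in> C v} = R - {u}" unfolding R_def by auto
    show ?thesis
    proof (cases "u \<in> R")
      case True
      then have r0: "r > 0" using finR unfolding r_def by (auto simp: card_gt_0_iff)
      have "card (R - {u}) = r - 1" using True finR unfolding r_def by simp
      then have "real (card (R - {u})) = real r - 1" using r0 by (simp add: of_nat_diff)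
      then show ?thesis using e1 e2 True by simp
    next
      case False
      then have "R - {u} = R" by simp
      then show ?thesis using e1 e2 False unfolding r_def by simp
    qed
  qed
  have sumeq: "(\<Sum>u\<in>A. rho n b (A - {u})) =
      real r * ((real n - (real r - 1)) / real r) + real (Suc n - r) * ((real n - real r) / (real r + 1))"
  proof -
    have "(\<Sum>u\<in>A. rho n b (A - {u})) = (\<Sum>u\<in>A. (if u \<in> R then (real n - (real r - 1)) / real r
                                   else (real n - real r) / (real r + 1)))"
      using trm by (rule sum.cong[OF refl])
    also have "\<dots> = (\<Sum>u\<in>A \<inter> {u. u \<in> R}. (real n - (real r - 1)) / real r)
         + (\<Sum>u\<in>A \<inter> - {u. u \<in> R}. (real n - real r) / (real r + 1))"
      by (rule sum.If_cases[OF Suc.prems(1)])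
    also have "A \<inter> {u. u \<in> R} = R" using RA by auto
    also have "A \<inter> - {u. u \<in> R} = A - R" by auto
    finally show ?thesis using cAR unfolding r_def by simp
  qed
  have rr: "real (Suc n - r) = real n + 1 - real r" using rle by (simp add: of_nat_diff)
  have cardA: "real (card A) = real n + 1" using Suc.prems(2) by simp
  have rhoS: "rho (Suc n) b A = (if r > 0 then 0 else 1) +
      (real r * ((real n - (real r - 1)) / real r) + (real n + 1 - real r) * ((real n - real r) / (real r + 1))) / (real n + 1)"
    using CUiff sumeq rr cardA by simp
  show ?case
  proof (cases "r = 0")
    case True
    have "rho (Suc n) b A = (real n + 1 - 0) / (0 + 1)"
      using rhoS rho_alg0[of "real n"] True by simp
    then show ?thesis using True unfolding r_def R_def by simp
  next
    case False
    then have rpos: "real r > 0" by simp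
    have "rho (Suc n) b A = (real n + 1 - real r) / (real r + 1)"
      using rhoS rho_alg[OF rpos, of "real n"] False by simp
    then show ?thesis unfolding r_def R_def by simp
  qed
qed

lemma hx_aux: "(a::real) \<ge> 0 \<Longrightarrow> s \<ge> 0 \<Longrightarrow> (1/(a+1) - 1/(s+1) + (a - s)/((s+1)*(s+2))) * ((a+1)*(s+1)*(s+2)) = (s-a)*(s+1-a)"
proof -
  assume a: "a \<ge> 0" and s: "s \<ge> 0"
  have 1: "1/(a+1) * ((a+1)*(s+1)*(s+2)) = (s+1)*(s+2)" using a by simp
  have 2: "1/(s+1) * ((a+1)*(s+1)*(s+2)) = (a+1)*(s+2)" using s by simp
  have "(s+1)*(s+2) \<noteq> 0" using s by simp
  then have 3: "(a - s)/((s+1)*(s+2)) * ((a+1)*(s+1)*(s+2)) = (a-s)*(a+1)" by (simp add: mult.assoc[symmetric] mult.commute[of _ "a+1"])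
  have "(1/(a+1) - 1/(s+1) + (a - s)/((s+1)*(s+2))) * ((a+1)*(s+1)*(s+2)) = (s+1)*(s+2) - (a+1)*(s+2) + (a-s)*(a+1)"
    using 1 2 3 by (simp only: distrib_right left_diff_distrib)
  also have "\<dots> = (s-a)*(s+1-a)" by (simp add: algebra_simps)
  finally show ?thesis .
qed

lemma lin_bound:
  fixes r t K :: nat
  shows "(real K - real t) / (real t + 1) - (real K + 1) * (real r - real t) / ((real t + 1) * (real t + 2))
     \<le> (real K - real r) / (real r + 1)"
proof -
  have key: "(real t - real r) * (real t + 1 - real r) \<ge> 0"
  proof (cases "r \<le> t")
    case True then show ?thesis by (simp add: mult_nonneg_nonneg)
  next
    case False then have "real r \<ge> real t + 1" by simp
    then show ?thesis by (simp add: mult_nonpos_nonpos)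
  qed
  define h where "h = 1 / (real r + 1) - 1 / (real t + 1) + (real r - real t) / ((real t + 1) * (real t + 2))"
  have hx: "h * ((real r + 1) * (real t + 1) * (real t + 2)) = (real t - real r) * (real t + 1 - real r)"
    using hx_aux[of "real r" "real t"] unfolding h_def by simp
  have pos: "(real r + 1) * (real t + 1) * (real t + 2) > 0" by simp
  have h0: "h \<ge> 0"
  proof (rule ccontr)
    assume "\<not> h \<ge> 0"
    then have "h * ((real r + 1) * (real t + 1) * (real t + 2)) < 0" using pos by (simp add: mult_neg_pos)
    then show False using hx key by linarith
  qed
  have e1: "(real K - real r) / (real r + 1) = (real K + 1) / (real r + 1) - 1" by (simp add: field_simps)
  have e2: "(real K - real t) / (real t + 1) = (real K + 1) / (real t + 1) - 1" by (simp add: field_simps)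
  have eq: "(real K - real r) / (real r + 1) - ((real K - real t) / (real t + 1) - (real K + 1) * (real r - real t) / ((real t + 1) * (real t + 2)))
      = (real K + 1) * h"
    unfolding e1 e2 h_def by (simp add: algebra_simps)
  have "(real K + 1) * h \<ge> 0" using h0 by simp
  then show ?thesis using eq by linarith
qed

lemma converse_bound:
  assumes B: "B > 0" and NK: "K1 * K2 \<le> N" and K: "K1 * K2 > 0"
    and M: "real (K1 * K2) * (M1 + M2) \<le> real N * real t"
  shows "real B * ((real (K1 * K2) - real t) / (real t + 1)) \<le> real (Max (L ` demands K1 K2 N))"
proof -
  define K where "K = K1 * K2"
  define Mx where "Mx = real (Max (L ` demands K1 K2 N))"
  define rb where "rb = (\<lambda>b. card {u\<in>U. b \<in> C u})"
  define g where "g = (real K - real t) / (real t + 1)"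
  define c where "c = (real K + 1) / ((real t + 1) * (real t + 2))"
  have N0: "N > 0" by (rule less_le_trans[OF K NK])
  have fb: "finite (bits N B)" unfolding bits_def by simp
  have cb: "card (bits N B) = N * B" unfolding bits_def by (simp add: card_cartesian_product)
  have "(\<Sum>j<N. mu j K U) \<le> (\<Sum>j<N. Mx)"
    by (rule sum_mono) (use mu_le_Max[OF N0 NK] in \<open>simp add: K_def Mx_def\<close>)
  then have 1: "G K U \<le> real N * Mx" using sum_mu[OF N0] by simp
  have 2: "G K U = (\<Sum>b\<in>bits N B. (real K - real (rb b)) / (real (rb b) + 1))"
    unfolding G_rho rb_def using rho_closed[OF finU] cardU K_def by simp
  have sumr: "(\<Sum>b\<in>bits N B. real (rb b)) \<le> real N * real B * real t"
  proof -
    have "(\<Sum>b\<in>bits N B. rb b) = (\<Sum>b\<in>bits N B. \<Sum>u\<in>U. if b \<in> C u then 1 else 0)"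
      unfolding rb_def using finU by (simp add: sum.If_cases Int_def)
    also have "\<dots> = (\<Sum>u\<in>U. \<Sum>b\<in>bits N B. if b \<in> C u then 1 else 0)" by (rule sum.swap)
    also have "\<dots> = (\<Sum>u\<in>U. card (C u))"
    proof (rule sum.cong[OF refl])
      fix u assume "u \<in> U"
      then have "bits N B \<inter> {b. b \<in> C u} = C u" using C_bits[of u] by auto
      then show "(\<Sum>b\<in>bits N B. if b \<in> C u then 1 else 0) = card (C u)"
        using fb by (simp add: sum.If_cases)
    qed
    finally have e: "real (\<Sum>b\<in>bits N B. rb b) = (\<Sum>u\<in>U. real (card (C u)))" by simp
    have "(\<Sum>u\<in>U. real (card (C u))) \<le> (\<Sum>u\<in>U. (M1 + M2) * real B)"
    proof (rule sum_mono)
      fix u assume u: "u \<in> U"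
      obtain k1 k2 where uk: "u = (k1, k2)" "k1 \<in> {1..K1}" "k2 \<in> {1..K2}" using u unfolding U_def by auto
      have "card (C u) \<le> card (Zm k1) + card (Zu (k1, k2))" unfolding C_def uk by (simp add: card_Un_le)
      moreover have "real (card (Zm k1)) \<le> M1 * real B" "real (card (Zu (k1, k2))) \<le> M2 * real B"
        using vs uk unfolding valid_scheme_def by auto
      ultimately show "real (card (C u)) \<le> (M1 + M2) * real B" by (simp add: algebra_simps)
    qed
    also have "\<dots> = real K * (M1 + M2) * real B" using cardU K_def by simp
    also have "\<dots> \<le> real N * real t * real B"
      using M B unfolding K_def by (simp add: mult_right_mono)
    finally show ?thesis using e by (simp add: of_nat_sum algebra_simps)
  qed
  have c0: "c \<ge> 0" unfolding c_def by simp
  have "(\<Sum>b\<in>bits N B. g - c * (real (rb b) - real t)) \<le> (\<Sum>b\<in>bits N B. (real K - real (rb b)) / (real (rb b) + 1))"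
    by (rule sum_mono) (use lin_bound[of K t] in \<open>simp add: g_def c_def\<close>)
  moreover have "(\<Sum>b\<in>bits N B. g - c * (real (rb b) - real t))
      = real (N * B) * g - c * ((\<Sum>b\<in>bits N B. real (rb b)) - real (N * B) * real t)"
    using cb by (simp add: sum_subtractf sum_distrib_left[symmetric] algebra_simps)
  moreover have "c * ((\<Sum>b\<in>bits N B. real (rb b)) - real (N * B) * real t) \<le> 0"
    using sumr c0 by (simp add: mult_nonneg_nonpos)
  ultimately have "real (N * B) * g \<le> real N * Mx" using 1 2 by linarith
  then have "real N * (real B * g) \<le> real N * Mx" by (simp add: algebra_simps)
  then have "real B * g \<le> Mx" using N0 by simp
  then show ?thesis unfolding g_def Mx_def K_def .
qed

end



lemma card_supsets:
  assumes "finite U" "G \<subseteq> U" "card G \<le> t"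
  shows "card {S. S \<subseteq> U \<and> card S = t \<and> G \<subseteq> S} = (card U - card G) choose (t - card G)"
proof -
  have fG: "finite G" using assms finite_subset by blast
  have bij: "bij_betw (\<lambda>S. S - G) {S. S \<subseteq> U \<and> card S = t \<and> G \<subseteq> S} {R. R \<subseteq> U - G \<and> card R = t - card G}"
  proof (rule bij_betw_byWitness[where f' = "\<lambda>R. R \<union> G"])
    show "\<forall>S\<in>{S. S \<subseteq> U \<and> card S = t \<and> G \<subseteq> S}. S - G \<union> G = S" by auto
    show "\<forall>R\<in>{R. R \<subseteq> U - G \<and> card R = t - card G}. R \<union> G - G = R" by auto
    show "(\<lambda>S. S - G) ` {S. S \<subseteq> U \<and> card S = t \<and> G \<subseteq> S} \<subseteq> {R. R \<subseteq> U - G \<and> card R = t - card G}"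
    proof
      fix R assume "R \<in> (\<lambda>S. S - G) ` {S. S \<subseteq> U \<and> card S = t \<and> G \<subseteq> S}"
      then obtain S where S: "S \<subseteq> U" "card S = t" "G \<subseteq> S" "R = S - G" by auto
      have "finite S" using S assms(1) finite_subset by blast
      then show "R \<in> {R. R \<subseteq> U - G \<and> card R = t - card G}" using S card_Diff_subset[OF fG S(3)] by auto
    qed
    show "(\<lambda>R. R \<union> G) ` {R. R \<subseteq> U - G \<and> card R = t - card G} \<subseteq> {S. S \<subseteq> U \<and> card S = t \<and> G \<subseteq> S}"
    proof
      fix S assume "S \<in> (\<lambda>R. R \<union> G) ` {R. R \<subseteq> U - G \<and> card R = t - card G}"
      then obtain R where R: "R \<subseteq> U - G" "card R = t - card G" "S = R \<union> G" by auto
      have "finite R" using R assms(1) finite_subset by blast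
      moreover have "R \<inter> G = {}" using R by auto
      ultimately have "card S = t" using R card_Un_disjoint[OF _ fG] assms(3) by simp
      then show "S \<in> {S. S \<subseteq> U \<and> card S = t \<and> G \<subseteq> S}" using R assms(2) by auto
    qed
  qed
  have "card {S. S \<subseteq> U \<and> card S = t \<and> G \<subseteq> S} = card {R. R \<subseteq> U - G \<and> card R = t - card G}"
    using bij_betw_same_card[OF bij] .
  also have "\<dots> = card (U - G) choose (t - card G)" using n_subsets[of "U - G"] assms(1) by simp
  also have "card (U - G) = card U - card G" using card_Diff_subset[OF fG assms(2)] .
  finally show ?thesis .
qed

lemma odd_card_insert:
  assumes "finite S" "u \<notin> S"
  shows "odd (card {v\<in>insert u S. P v}) = (odd (card {v\<in>S. P v}) \<noteq> P u)"
proof -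
  have fin: "finite {v\<in>S. P v}" using assms by simp
  show ?thesis
  proof (cases "P u")
    case True
    then have "{v\<in>insert u S. P v} = insert u {v\<in>S. P v}" by auto
    then show ?thesis using True fin assms(2) by simp
  next
    case False
    then have "{v\<in>insert u S. P v} = {v\<in>S. P v}" by auto
    then show ?thesis using False by simp
  qed
qed

locale ach =
  fixes K1 K2 t N :: nat and hb h1 :: "nat \<Rightarrow> (nat \<times> nat) set"
  assumes K1: "K1 > 0" and K2: "K2 > 0" and t0: "t > 0" and tK2: "K2 < t" and tK: "t < K1 * K2"
    and NK: "K1 * K2 \<le> N"
    and hb: "bij_betw hb {0..<(K1 * K2) choose t} {S. S \<subseteq> {1..K1} \<times> {1..K2} \<and> card S = t}"
    and h1: "bij_betw h1 {0..<(K1 * K2) choose Suc t} {S. S \<subseteq> {1..K1} \<times> {1..K2} \<and> card S = Suc t}"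
begin

definition "U = {1..K1} \<times> {1..K2}"
definition "BB = (K1 * K2) choose t"
definition "L0 = (K1 * K2) choose Suc t"
definition "idxS S = inv_into {0..<BB} hb S"
definition "idx1 S = inv_into {0..<L0} h1 S"

definition "Zm k1 = {(n, b). n \<in> {1..N} \<and> b < BB \<and> {k1} \<times> {1..K2} \<subseteq> hb b}"
definition "Cm u = {(n, b). n \<in> {1..N} \<and> b < BB \<and> u \<in> hb b}"
definition "Zu u = Cm u - Zm (fst u)"
definition "LL (d::demand) = L0"
definition "XX d w = map (\<lambda>i. odd (card {v \<in> h1 i. w (d v) (idxS (h1 i - {v}))})) [0..<L0]"
definition "YY (d::demand) (k1::nat) x c = x @ map (\<lambda>i. c (i div BB + 1, i mod BB) = Some True) [0..<N * BB]"
definition "vl y c p = (c p = Some True \<or> y ! (L0 + (fst p - 1) * BB + snd p))"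
definition "DD d u y c b = (if u \<in> hb b then vl y c (d u, b)
    else (y ! idx1 (insert u (hb b))) \<noteq> odd (card {v \<in> hb b. vl y c (d v, idxS (insert u (hb b) - {v}))}))"

lemma finU: "finite U" unfolding U_def by simp
lemma cardU: "card U = K1 * K2" unfolding U_def by (simp add: card_cartesian_product)

lemma hb_mem: "b < BB \<Longrightarrow> hb b \<subseteq> U \<and> card (hb b) = t"
  using hb unfolding bij_betw_def BB_def U_def by auto

lemma idxS: "S \<subseteq> U \<Longrightarrow> card S = t \<Longrightarrow> idxS S < BB \<and> hb (idxS S) = S"
proof -
  assume "S \<subseteq> U" "card S = t"
  then have S: "S \<in> hb ` {0..<BB}" using hb unfolding bij_betw_def BB_def U_def by auto
  show ?thesis unfolding idxS_def using inv_into_into[OF S] f_inv_into_f[OF S] by simp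
qed

lemma idxS_hb: "b < BB \<Longrightarrow> idxS (hb b) = b"
  unfolding idxS_def using hb unfolding bij_betw_def BB_def by (simp add: inv_into_f_f)

lemma idx1: "S \<subseteq> U \<Longrightarrow> card S = Suc t \<Longrightarrow> idx1 S < L0 \<and> h1 (idx1 S) = S"
proof -
  assume "S \<subseteq> U" "card S = Suc t"
  then have S: "S \<in> h1 ` {0..<L0}" using h1 unfolding bij_betw_def L0_def U_def by auto
  show ?thesis unfolding idx1_def using inv_into_into[OF S] f_inv_into_f[OF S] by simp
qed

lemma cache_some: "cache Z w p = Some True \<longleftrightarrow> p \<in> Z \<and> w (fst p) (snd p)"
  unfolding cache_def by (cases p) auto

lemma vl_correct:
  assumes u: "u = (k1, k2)" "u \<in> U" and p: "p = (n, b')" "n \<in> {1..N}" "b' < BB" "p \<in> Cm u"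
  shows "vl (YY d k1 (XX d w) (cache (Zm k1) w)) (cache (Zu u) w) p = w n b'"
proof -
  let ?y = "YY d k1 (XX d w) (cache (Zm k1) w)"
  define i where "i = (n - 1) * BB + b'"
  have iN: "i < N * BB"
  proof -
    have "(n - 1) * BB + b' < (n - 1) * BB + BB" using p by simp
    also have "\<dots> = n * BB" using p by (cases n) auto
    also have "\<dots> \<le> N * BB" using p by simp
    finally show ?thesis unfolding i_def .
  qed
  have idiv: "i div BB = n - 1" "i mod BB = b'" unfolding i_def using p by auto
  have lx: "length (XX d w) = L0" unfolding XX_def by simp
  have "?y ! (L0 + (fst p - 1) * BB + snd p) = ?y ! (L0 + i)" using p unfolding i_def by (simp add: add.assoc)
  also have "\<dots> = (cache (Zm k1) w (n, b') = Some True)"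
    unfolding YY_def using lx iN idiv p by (simp add: nth_append)
  finally have 1: "?y ! (L0 + (fst p - 1) * BB + snd p) = (p \<in> Zm k1 \<and> w n b')" using p cache_some by simp
  have 2: "(cache (Zu u) w p = Some True) = (p \<in> Zu u \<and> w n b')" using p cache_some by simp
  have "p \<in> Zm k1 \<or> p \<in> Zu u" using p u unfolding Zu_def by auto
  then show ?thesis unfolding vl_def using 1 2 by auto
qed

lemma decode:
  assumes d: "d \<in> demands K1 K2 N" and u: "u = (k1, k2)" "k1 \<in> {1..K1}" "k2 \<in> {1..K2}" and b: "b < BB"
  shows "DD d u (YY d k1 (XX d w) (cache (Zm k1) w)) (cache (Zu u) w) b = w (d u) b"
proof -
  let ?y = "YY d k1 (XX d w) (cache (Zm k1) w)"
  let ?c = "cache (Zu u) w"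
  have uU: "u \<in> U" using u unfolding U_def by simp
  have dU: "\<And>v. v \<in> U \<Longrightarrow> d v \<in> {1..N}" using d unfolding demands_def U_def by (auto simp: PiE_def Pi_def)
  have hbb: "hb b \<subseteq> U" "card (hb b) = t" using hb_mem[OF b] by auto
  show ?thesis
  proof (cases "u \<in> hb b")
    case True
    have "(d u, b) \<in> Cm u" using True dU[OF uU] b unfolding Cm_def by simp
    then show ?thesis unfolding DD_def using True vl_correct[OF u(1) uU refl dU[OF uU] b] by simp
  next
    case False
    define S' where "S' = insert u (hb b)"
    have finS: "finite (hb b)" using hbb finU finite_subset by blast
    have S'U: "S' \<subseteq> U" "card S' = Suc t" unfolding S'_def using hbb uU False finS by auto
    have i1: "idx1 S' < L0" "h1 (idx1 S') = S'" using idx1[OF S'U] by auto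
    have lx: "length (XX d w) = L0" unfolding XX_def by simp
    have yi: "?y ! idx1 S' = odd (card {v \<in> S'. w (d v) (idxS (S' - {v}))})"
      unfolding YY_def using i1 lx by (simp add: nth_append XX_def)
    have vv: "vl ?y ?c (d v, idxS (S' - {v})) = w (d v) (idxS (S' - {v}))" if v: "v \<in> hb b" for v
    proof -
      have vU: "v \<in> U" using v hbb by auto
      have sub: "S' - {v} \<subseteq> U" "card (S' - {v}) = t" using S'U v False finS unfolding S'_def by auto
      have ix: "idxS (S' - {v}) < BB" "hb (idxS (S' - {v})) = S' - {v}" using idxS[OF sub] by auto
      have "u \<in> S' - {v}" using v False unfolding S'_def by auto
      then have "(d v, idxS (S' - {v})) \<in> Cm u" using ix dU[OF vU] unfolding Cm_def by simp
      then show ?thesis using vl_correct[OF u(1) uU refl dU[OF vU] ix(1)] by simp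
    qed
    have eqc: "{v \<in> hb b. vl ?y ?c (d v, idxS (S' - {v}))} = {v \<in> hb b. w (d v) (idxS (S' - {v}))}"
      using vv by auto
    have Su: "S' - {u} = hb b" unfolding S'_def using False by auto
    have "odd (card {v \<in> S'. w (d v) (idxS (S' - {v}))})
        = (odd (card {v \<in> hb b. w (d v) (idxS (S' - {v}))}) \<noteq> w (d u) (idxS (S' - {u})))"
      unfolding S'_def using odd_card_insert[OF finS False] by simp
    then show ?thesis unfolding DD_def using False yi eqc Su idxS_hb[OF b]
      unfolding S'_def by auto
  qed
qed


lemma card_hb_filter:
  "card {b\<in>{0..<BB}. P (hb b)} = card {S. S \<subseteq> U \<and> card S = t \<and> P S}"
proof -
  have inj: "inj_on hb {b\<in>{0..<BB}. P (hb b)}"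
    using hb unfolding bij_betw_def BB_def by (auto intro: inj_on_subset)
  have "hb ` {b\<in>{0..<BB}. P (hb b)} = {S. S \<subseteq> U \<and> card S = t \<and> P S}"
  proof
    show "hb ` {b\<in>{0..<BB}. P (hb b)} \<subseteq> {S. S \<subseteq> U \<and> card S = t \<and> P S}"
      using hb_mem by auto
    show "{S. S \<subseteq> U \<and> card S = t \<and> P S} \<subseteq> hb ` {b\<in>{0..<BB}. P (hb b)}"
    proof
      fix S assume S: "S \<in> {S. S \<subseteq> U \<and> card S = t \<and> P S}"
      then have "idxS S < BB" "hb (idxS S) = S" using idxS by auto
      then show "S \<in> hb ` {b\<in>{0..<BB}. P (hb b)}" using S by (auto intro!: image_eqI[of _ _ "idxS S"])
    qed
  qed
  then show ?thesis using card_image[OF inj] by simp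
qed

lemma card_Zm:
  assumes "k1 \<in> {1..K1}"
  shows "card (Zm k1) = N * ((K1 * K2 - K2) choose (t - K2))"
proof -
  define G where "G = {k1} \<times> {1..K2}"
  have "Zm k1 = {1..N} \<times> {b\<in>{0..<BB}. G \<subseteq> hb b}" unfolding Zm_def G_def by auto
  then have "card (Zm k1) = N * card {b\<in>{0..<BB}. G \<subseteq> hb b}" by (simp add: card_cartesian_product)
  also have "card {b\<in>{0..<BB}. G \<subseteq> hb b} = card {S. S \<subseteq> U \<and> card S = t \<and> G \<subseteq> S}"
    by (rule card_hb_filter)
  also have "\<dots> = (card U - card G) choose (t - card G)"
    by (rule card_supsets) (use assms tK2 finU in \<open>auto simp: G_def U_def\<close>)
  finally show ?thesis using cardU by (simp add: G_def)
qed

lemma card_Cm: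
  assumes "u \<in> U"
  shows "card (Cm u) = N * ((K1 * K2 - 1) choose (t - 1))"
proof -
  have "Cm u = {1..N} \<times> {b\<in>{0..<BB}. {u} \<subseteq> hb b}" unfolding Cm_def by auto
  then have "card (Cm u) = N * card {b\<in>{0..<BB}. {u} \<subseteq> hb b}" by (simp add: card_cartesian_product)
  also have "card {b\<in>{0..<BB}. {u} \<subseteq> hb b} = card {S. S \<subseteq> U \<and> card S = t \<and> {u} \<subseteq> S}"
    by (rule card_hb_filter)
  also have "\<dots> = (card U - card {u}) choose (t - card {u})"
    by (rule card_supsets) (use assms t0 finU in auto)
  finally show ?thesis using cardU by simp
qed

lemma Zm_Cm: "k1 \<in> {1..K1} \<Longrightarrow> k2 \<in> {1..K2} \<Longrightarrow> Zm k1 \<subseteq> Cm (k1, k2)"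
  unfolding Zm_def Cm_def by auto

lemma card_Zu:
  assumes "k1 \<in> {1..K1}" "k2 \<in> {1..K2}"
  shows "real (card (Zu (k1, k2))) = real N * real ((K1 * K2 - 1) choose (t - 1)) - real N * real ((K1 * K2 - K2) choose (t - K2))"
proof -
  have u: "(k1, k2) \<in> U" using assms unfolding U_def by simp
  have fin: "finite (Zm k1)" unfolding Zm_def by (rule finite_subset[of _ "{1..N} \<times> {..<BB}"]) auto
  have "card (Zu (k1, k2)) = card (Cm (k1, k2)) - card (Zm k1)"
    unfolding Zu_def using card_Diff_subset[OF fin Zm_Cm[OF assms]] by simp
  moreover have "card (Zm k1) \<le> card (Cm (k1, k2))"
    by (rule card_mono[OF _ Zm_Cm[OF assms]]) (unfold Cm_def, rule finite_subset[of _ "{1..N} \<times> {..<BB}"], auto)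
  ultimately show ?thesis using card_Zm[OF assms(1)] card_Cm[OF u] by (simp add: of_nat_diff)
qed

lemma valid:
  assumes "real N * real ((K1 * K2 - K2) choose (t - K2)) \<le> M1 * real BB"
    and "real N * real ((K1 * K2 - 1) choose (t - 1)) - real N * real ((K1 * K2 - K2) choose (t - K2)) \<le> M2 * real BB"
  shows "valid_scheme K1 K2 M1 M2 N BB Zm Zu LL XX YY DD"
  unfolding valid_scheme_def
proof (intro conjI ballI allI impI)
  fix k1 assume k1: "k1 \<in> {1..K1}"
  show "Zm k1 \<subseteq> bits N BB" unfolding Zm_def bits_def by auto
  show "real (card (Zm k1)) \<le> M1 * real BB" using card_Zm[OF k1] assms(1) by simp
next
  fix k1 k2 assume k: "k1 \<in> {1..K1}" "k2 \<in> {1..K2}"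
  show "Zu (k1, k2) \<subseteq> bits N BB" unfolding Zu_def Cm_def bits_def by auto
  show "real (card (Zu (k1, k2))) \<le> M2 * real BB" using card_Zu[OF k] assms(2) by simp
next
  fix d w show "length (XX d w) = LL d" unfolding XX_def LL_def by simp
next
  fix d k1 k2 w b assume "d \<in> demands K1 K2 N" "k1 \<in> {1..K1}" "k2 \<in> {1..K2}" "b < BB"
  then show "DD d (k1, k2) (YY d k1 (XX d w) (cache (Zm k1) w)) (cache (Zu (k1, k2)) w) b = w (d (k1, k2)) b"
    using decode by blast
qed

lemma dem_ne: "demands K1 K2 N \<noteq> {}"
proof -
  have N1: "1 \<le> N" using NK K1 K2 by (metis One_nat_def Suc_leI le_trans nat_0_less_mult_iff)
  have "(\<lambda>u. if u \<in> U then 1 else undefined) \<in> demands K1 K2 N"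
    using N1 unfolding demands_def U_def by (auto simp: PiE_def Pi_def extensional_def)
  then show ?thesis by auto
qed

lemma Max_LL: "Max (LL ` demands K1 K2 N) = L0"
proof -
  have "LL ` demands K1 K2 N = {L0}" using dem_ne unfolding LL_def by auto
  then show ?thesis by simp
qed

lemma BB_pos: "BB > 0" unfolding BB_def using tK by simp

lemma load: "real L0 / real BB = (real (K1 * K2) - real t) / (real t + 1)"
proof -
  define K where "K = K1 * K2"
  have K0: "K = Suc (K - 1)" using tK unfolding K_def by simp
  have "Suc t * (Suc (K - 1) choose Suc t) = Suc (K - 1) * ((K - 1) choose t)" by (rule Suc_times_binomial)
  then have a: "Suc t * L0 = K * ((K - 1) choose t)" unfolding L0_def K_def[symmetric] using K0 by simp
  have b: "(K - t) * BB = K * ((K - 1) choose t)" unfolding BB_def K_def[symmetric] by (rule binomial_absorb_comp)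
  have "real (Suc t) * real L0 = real (K - t) * real BB" using a b by (metis of_nat_mult)
  moreover have e1: "real (Suc t) = real t + 1" by simp
  moreover have e2: "real (K - t) = real (K1 * K2) - real t" using tK unfolding K_def by (simp add: of_nat_diff)
  ultimately have "(real t + 1) * real L0 = (real (K1 * K2) - real t) * real BB" by metis
  then show ?thesis using BB_pos by (simp add: field_simps)
qed

end

theorem corollary1:
  fixes K1 K2 t N :: nat and M1 M2 :: real
  assumes "K1 > 0" "K2 > 0" "t > 0"
    and "K2 < t" "t < K1 * K2"
    and "N \<ge> K1 * K2"
    and "M1 / real N = real ((K1 * K2 - K2) choose (t - K2)) / real ((K1 * K2) choose t)"
    and "M2 / real N = real t / real (K1 * K2)
           - real ((K1 * K2 - K2) choose (t - K2)) / real ((K1 * K2) choose t)"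
  shows "R1_star K1 K2 M1 M2 N
           = real (K1 * K2) * (1 - (M1 + M2) / real N) / (real (K1 * K2) * ((M1 + M2) / real N) + 1)
       \<and> R1_star K1 K2 M1 M2 N = (real (K1 * K2) - real t) / (real t + 1)"
proof -
  define K where "K = K1 * K2"
  define g where "g = (real K - real t) / (real t + 1)"
  define c1 where "c1 = (K - K2) choose (t - K2)"
  define cK where "cK = K choose t"
  have K0: "K > 0" using assms unfolding K_def by simp
  have N0: "N > 0" using assms K0 unfolding K_def by linarith
  have cK0: "cK > 0" using assms unfolding cK_def K_def by simp
  define UU where "UU = {1..K1} \<times> {1..K2}"
  have finUU: "finite UU" unfolding UU_def by simp
  have cardUU: "card UU = K" unfolding UU_def K_def by (simp add: card_cartesian_product)
  obtain hb where hb0: "bij_betw hb {0..<card {S. S \<subseteq> UU \<and> card S = t}} {S. S \<subseteq> UU \<and> card S = t}"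
    using ex_bij_betw_nat_finite[of "{S. S \<subseteq> UU \<and> card S = t}"] finUU by auto
  obtain h1 where h10: "bij_betw h1 {0..<card {S. S \<subseteq> UU \<and> card S = Suc t}} {S. S \<subseteq> UU \<and> card S = Suc t}"
    using ex_bij_betw_nat_finite[of "{S. S \<subseteq> UU \<and> card S = Suc t}"] finUU by auto
  have hb: "bij_betw hb {0..<(K1 * K2) choose t} {S. S \<subseteq> {1..K1} \<times> {1..K2} \<and> card S = t}"
    using hb0 n_subsets[OF finUU] cardUU unfolding UU_def K_def by simp
  have h1: "bij_betw h1 {0..<(K1 * K2) choose Suc t} {S. S \<subseteq> {1..K1} \<times> {1..K2} \<and> card S = Suc t}"
    using h10 n_subsets[OF finUU] cardUU unfolding UU_def K_def by simp
  interpret A: ach K1 K2 t N hb h1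
    using assms hb h1 by unfold_locales auto
  have BB: "A.BB = cK" unfolding A.BB_def cK_def K_def ..
  have M1e: "M1 = real N * real c1 / real cK"
    using assms(7) N0 unfolding c1_def cK_def K_def by (simp add: field_simps)
  have M1B: "M1 * real cK = real N * real c1" using M1e cK0 by simp
  have tcK: "real t * real cK = real K * real ((K - 1) choose (t - 1))"
    using times_binomial_minus1_eq[OF assms(3), of K] unfolding cK_def by (metis of_nat_mult)
  have M2e: "M2 = real N * (real t / real K - real c1 / real cK)"
    using assms(8) N0 unfolding c1_def cK_def K_def by (simp add: field_simps)
  have M2B: "M2 * real cK = real N * real ((K - 1) choose (t - 1)) - real N * real c1"
  proof -
    have "M2 * real cK = real N * (real t * real cK / real K) - real N * real c1"
      using M2e cK0 by (simp add: field_simps)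
    also have "real t * real cK / real K = real ((K - 1) choose (t - 1))" using tcK K0 by (simp add: field_simps)
    finally show ?thesis .
  qed
  have valid: "valid_scheme K1 K2 M1 M2 N A.BB A.Zm A.Zu A.LL A.XX A.YY A.DD"
    by (rule A.valid) (use M1B M2B BB in \<open>simp_all add: c1_def K_def\<close>)
  define SetR where "SetR = {real (Max (L ` demands K1 K2 N)) / real B | B Zm Zu L X Y D.
      B > 0 \<and> valid_scheme K1 K2 M1 M2 N B Zm Zu L X Y D}"
  have mem: "g \<in> SetR"
  proof -
    have "real (Max (A.LL ` demands K1 K2 N)) / real A.BB = g"
      using A.Max_LL A.load unfolding g_def K_def by simp
    then show ?thesis unfolding SetR_def using valid A.BB_pos by blast
  qed
  have frac0: "(M1 + M2) / real N = real t / real K"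
    using assms(7,8) unfolding K_def by (simp add: add_divide_distrib)
  have Msum: "M1 + M2 = real N * real t / real K"
    using frac0 N0 by (simp add: field_simps)
  have lower: "g \<le> y" if y: "y \<in> SetR" for y
  proof -
    obtain B Zm Zu L X Y D where yB: "y = real (Max (L ` demands K1 K2 N)) / real B" "B > 0"
      "valid_scheme K1 K2 M1 M2 N B Zm Zu L X Y D"
      using y unfolding SetR_def by blast
    interpret C: conv K1 K2 M1 M2 N B Zm Zu L X Y D using yB(3) by unfold_locales
    have "real (K1 * K2) * (M1 + M2) \<le> real N * real t" using Msum K0 unfolding K_def by simp
    then have "real B * g \<le> real (Max (L ` demands K1 K2 N))"
      using C.converse_bound[OF yB(2)] assms unfolding g_def K_def by simp
    then have "real B * g \<le> real B * y" using yB(1,2) by simp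
    then show ?thesis using yB(2) by simp
  qed
  have R: "R1_star K1 K2 M1 M2 N = g"
    unfolding R1_star_def SetR_def[symmetric] by (rule cInf_eq_minimum[OF mem lower])
  have frac: "(M1 + M2) / real N = real t / real K" using Msum N0 by simp
  have "real K * (1 - (M1 + M2) / real N) / (real K * ((M1 + M2) / real N) + 1) = g"
  proof -
    have a: "real K * (1 - real t / real K) = real K - real t" using K0 by (simp add: right_diff_distrib)
    have b: "real K * (real t / real K) = real t" using K0 by simp
    show ?thesis unfolding frac g_def a b by simp
  qed
  then show ?thesis using R unfolding K_def g_def by simp
qed

end
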